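(* Let $d\ge1$ and let $\varphi^1,\dots,\varphi^{d+1}\in\mathbb{R}^d$ satisfy $\|\varphi^j\|_2=1$ for all $j$ (Euclidean norm) and $\langle\varphi^i,\varphi^j\rangle=-\frac1d$ for all $1\le i\neq j\le d+1$. Let $B_2=\{x\in\mathbb{R}^d:\|x\|_2\le1\}$ and $B^o_2(x)=\{y:\|y-x\|_2<1\}$. Then there exists $a>0$ such that $$B_2\subset\bigcup_{j=1}^{d+1}B^o_2(a\varphi^j).$$ *)

theory Defs
  imports "HOL-Analysis.Analysis"
begin

end

theory Submission imports Defs begin

lemma gram:
  fixes \<phi> :: "nat \<Rightarrow> real ^ 'n" and d :: nat
  assumes unit: "\<And>j. j \<in> I \<Longrightarrow> norm (\<phi> j) = 1"
    and inner: "\<And>i j. i \<in> I \<Longrightarrow> j \<in> I \<Longrightarrow> i \<noteq> j \<Longrightarrow> inner (\<phi> i) (\<phi> j) = - 1 / real d"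
    and J: "J \<subseteq> I" "finite J" "k \<in> J"
  shows "inner (\<Sum>j\<in>J. c j *\<^sub>R \<phi> j) (\<phi> k) = c k - (\<Sum>j\<in>J-{k}. c j) / real d"
proof -
  have kk: "inner (\<phi> k) (\<phi> k) = 1" using unit[of k] J by (auto simp: dot_square_norm)
  have "inner (\<Sum>j\<in>J. c j *\<^sub>R \<phi> j) (\<phi> k) = (\<Sum>j\<in>J. c j * inner (\<phi> j) (\<phi> k))"
    by (simp add: inner_sum_left)
  also have "\<dots> = c k * inner (\<phi> k) (\<phi> k) + (\<Sum>j\<in>J-{k}. c j * inner (\<phi> j) (\<phi> k))"
    using J by (simp add: sum.remove)
  also have "(\<Sum>j\<in>J-{k}. c j * inner (\<phi> j) (\<phi> k)) = (\<Sum>j\<in>J-{k}. c j * (- 1 / real d))"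
  proof (rule sum.cong[OF refl])
    fix j assume "j \<in> J-{k}" then show "c j * inner (\<phi> j) (\<phi> k) = c j * (- 1 / real d)"
      using J inner[of j k] by (auto simp: subset_iff)
  qed
  also have "\<dots> = - (\<Sum>j\<in>J-{k}. c j) / real d"
    by (simp add: sum_divide_distrib sum_negf)
  finally show ?thesis using kk by simp
qed

theorem proposition3p4:
  fixes \<phi> :: "nat \<Rightarrow> real ^ 'n"
  assumes unit: "\<And>j. j \<in> {1..CARD('n) + 1} \<Longrightarrow> norm (\<phi> j) = 1"
    and inner: "\<And>i j. i \<in> {1..CARD('n) + 1} \<Longrightarrow> j \<in> {1..CARD('n) + 1} \<Longrightarrow> i \<noteq> j \<Longrightarrow>
        inner (\<phi> i) (\<phi> j) = - 1 / real CARD('n)"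
  shows "\<exists>a::real. a > 0 \<and> cball 0 1 \<subseteq> (\<Union>j\<in>{1..CARD('n) + 1}. ball (a *\<^sub>R \<phi> j) 1)"
proof -
  define d where "d = CARD('n)"
  define I where "I = {1..d+1}"
  have d1: "d \<ge> 1" unfolding d_def by (simp add: Suc_leI)
  hence dpos: "real d > 0" by simp
  have unit': "\<And>j. j \<in> I \<Longrightarrow> norm (\<phi> j) = 1" using unit unfolding I_def d_def by auto
  have inner': "\<And>i j. i \<in> I \<Longrightarrow> j \<in> I \<Longrightarrow> i \<noteq> j \<Longrightarrow> inner (\<phi> i) (\<phi> j) = - 1 / real d"
    using inner unfolding I_def d_def by auto
  note G = gram[where I=I and d=d and \<phi>=\<phi>, OF unit' inner']
  have self: "\<And>k. k \<in> I \<Longrightarrow> inner (\<phi> k) (\<phi> k) = 1" using unit' by (auto simp: dot_square_norm)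
  have injI: "inj_on \<phi> I"
  proof (rule inj_onI, rule ccontr)
    fix i j assume ij: "i \<in> I" "j \<in> I" "\<phi> i = \<phi> j" "i \<noteq> j"
    have "inner (\<phi> i) (\<phi> j) = 1" using self[of i] ij by simp
    moreover have "inner (\<phi> i) (\<phi> j) = - 1 / real d" by (rule inner'[OF ij(1,2,4)])
    ultimately show False using dpos by (smt (verit) divide_neg_pos)
  qed
  define A where "A = \<phi> ` {1..d}"
  have AI: "{1..d} \<subseteq> I" unfolding I_def by auto
  have injA: "inj_on \<phi> {1..d}" using injI AI inj_on_subset by blast
  have cardA: "card A = d" unfolding A_def using card_image[OF injA] by simp
  have indep: "independent A"
  proof (rule independent_if_scalars_zero)
    show "finite A" unfolding A_def by simp
    fix u v assume su: "(\<Sum>x\<in>A. u x *\<^sub>R x) = 0" and v: "v \<in> A"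
    define c where "c i = u (\<phi> i)" for i
    have s0: "(\<Sum>i\<in>{1..d}. c i *\<^sub>R \<phi> i) = 0"
      using su unfolding A_def c_def sum.reindex[OF injA] by (simp add: o_def)
    define U where "U = (\<Sum>i\<in>{1..d}. c i)"
    have ck: "c k = U / (real d + 1)" if k: "k \<in> {1..d}" for k
    proof -
      have "0 = c k - (\<Sum>j\<in>{1..d}-{k}. c j) / real d"
        using G[where J="{1..d}" and k=k and c=c] AI k s0 by simp
      moreover have "(\<Sum>j\<in>{1..d}-{k}. c j) = U - c k" unfolding U_def using k
        by (simp add: sum_diff1)
      ultimately have "c k * real d = U - c k" using dpos by (simp add: field_simps)
      thus ?thesis by (simp add: field_simps)
    qed
    have "U = (\<Sum>i\<in>{1..d}. c i)" by (simp add: U_def)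
    also have "\<dots> = (\<Sum>i\<in>{1..d}. U / (real d + 1))" by (intro sum.cong) (auto simp: ck)
    also have "\<dots> = real d * U / (real d + 1)" by simp
    finally have "U * (real d + 1) = real d * U" by (simp add: field_simps)
    hence "U = 0" by (simp add: algebra_simps)
    obtain i where "i \<in> {1..d}" "v = \<phi> i" using v unfolding A_def by auto
    thus "u v = 0" using ck \<open>U = 0\<close> unfolding c_def by simp
  qed
  have span: "UNIV \<subseteq> span A"
    by (rule card_ge_dim_independent) (auto simp: indep cardA d_def)
  have orth0: "y = 0" if "\<And>k. k \<in> I \<Longrightarrow> inner y (\<phi> k) = 0" for y :: "real ^ 'n"
  proof -
    have "orthogonal y y"
      by (rule orthogonal_to_span[of y A y]) (use span that AI in \<open>auto simp: A_def orthogonal_def\<close>)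
    thus ?thesis by (simp add: orthogonal_def)
  qed
  have cardI: "card I = d + 1" unfolding I_def by simp
  have sumphi: "(\<Sum>j\<in>I. \<phi> j) = 0"
  proof (rule orth0)
    fix k assume k: "k \<in> I"
    have "inner (\<Sum>j\<in>I. 1 *\<^sub>R \<phi> j) (\<phi> k) = 1 - (\<Sum>j\<in>I-{k}. 1) / real d"
      using G[where J=I and k=k and c="\<lambda>_. 1"] k unfolding I_def by simp
    also have "\<dots> = 0" using k cardI dpos by (simp add: card_Diff_singleton)
    finally show "inner (\<Sum>j\<in>I. \<phi> j) (\<phi> k) = 0" by simp
  qed
  have Ine: "I \<noteq> {}" "finite I" unfolding I_def by auto
  have key: "\<exists>j\<in>I. inner x (\<phi> j) \<ge> norm x / (2 * real d)" for x :: "real ^ 'n"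
  proof (cases "x = 0")
    case True
    then show ?thesis unfolding I_def by auto
  next
    case False
    define r where "r = norm x"
    have rpos: "r > 0" using False unfolding r_def by simp
    define t where "t j = inner x (\<phi> j)" for j
    have st: "(\<Sum>j\<in>I. t j) = 0" unfolding t_def using sumphi by (simp add: inner_sum_right[symmetric])
    define T where "T = (real d / (real d + 1)) *\<^sub>R (\<Sum>j\<in>I. t j *\<^sub>R \<phi> j)"
    have "x - T = 0"
    proof (rule orth0)
      fix k assume k: "k \<in> I"
      have rest: "(\<Sum>j\<in>I-{k}. t j) = - t k" using st k Ine by (simp add: sum_diff1)
      have "inner T (\<phi> k) = (real d / (real d + 1)) * (t k - (\<Sum>j\<in>I-{k}. t j) / real d)"
        unfolding T_def using G[where J=I and k=k and c=t] k Ine by simp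
      also have "\<dots> = t k"
      proof -
        have p: "real d + real d * real d > 0" using dpos by (simp add: add_pos_pos)
        have "t k - (- t k) / real d = t k * (real d + 1) / real d" using dpos by (simp add: field_simps)
        then show ?thesis unfolding rest using dpos p by simp
      qed
      finally show "inner (x - T) (\<phi> k) = 0" by (simp add: inner_diff_left t_def)
    qed
    hence xT: "x = T" by simp
    have "r^2 = inner x x" unfolding r_def by (simp add: dot_square_norm)
    also have "\<dots> = inner T x" using xT by simp
    also have "\<dots> = (real d / (real d + 1)) * (\<Sum>j\<in>I. t j * t j)"
      unfolding T_def by (simp add: inner_sum_left inner_sum_right t_def inner_commute)
    finally have r2: "r^2 = (real d / (real d + 1)) * (\<Sum>j\<in>I. t j * t j)" .
    have tb: "\<bar>t j\<bar> \<le> r" if "j \<in> I" for j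
      using Cauchy_Schwarz_ineq2[of x "\<phi> j"] unit'[OF that] unfolding t_def r_def by simp
    show ?thesis
    proof (rule ccontr)
      assume "\<not> ?thesis"
      hence lt: "\<And>j. j \<in> I \<Longrightarrow> t j < r / (2 * real d)" unfolding t_def r_def by auto
      have "(\<Sum>j\<in>I. t j * t j) \<le> (\<Sum>j\<in>I. r * \<bar>t j\<bar>)"
      proof (rule sum_mono)
        fix j assume "j \<in> I"
        then have "\<bar>t j\<bar> * \<bar>t j\<bar> \<le> r * \<bar>t j\<bar>" using tb mult_right_mono abs_ge_zero by blast
        then show "t j * t j \<le> r * \<bar>t j\<bar>" by (metis abs_mult_self_eq)
      qed
      also have "(\<Sum>j\<in>I. r * \<bar>t j\<bar>) = r * (\<Sum>j\<in>I. 2 * max (t j) 0 - t j)"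
      proof -
        have "(\<Sum>j\<in>I. \<bar>t j\<bar>) = (\<Sum>j\<in>I. 2 * max (t j) 0 - t j)"
          by (intro sum.cong) auto
        then show ?thesis by (simp add: sum_distrib_left[symmetric])
      qed
      also have "\<dots> = r * (2 * (\<Sum>j\<in>I. max (t j) 0))" using st by (simp add: sum_subtractf sum_distrib_left)
      also have "(\<Sum>j\<in>I. max (t j) 0) < (\<Sum>j\<in>I. r / (2 * real d))"
        using Ine lt rpos dpos by (intro sum_strict_mono) auto
      hence "r * (2 * (\<Sum>j\<in>I. max (t j) 0)) < r * (2 * (\<Sum>j\<in>I. r / (2 * real d)))"
        using rpos by (intro mult_strict_left_mono) auto
      also have "(\<Sum>j\<in>I. r / (2 * real d)) = (real d + 1) * r / (2 * real d)" using cardI by simp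
      finally have "(\<Sum>j\<in>I. t j * t j) < r * (2 * ((real d + 1) * r / (2 * real d)))" .
      hence "r^2 < (real d / (real d + 1)) * (r * (2 * ((real d + 1) * r / (2 * real d))))"
        unfolding r2 using dpos by (intro mult_strict_left_mono) auto
      also have "\<dots> = r^2"
      proof -
        have nz: "real d * 2 + real d * (real d * 2) \<noteq> 0" using dpos
          by (metis add_pos_pos less_irrefl mult_pos_pos zero_less_numeral)
        show ?thesis using dpos nz by (simp add: field_simps power2_eq_square)
      qed
      finally show False by simp
    qed
  qed
  define a where "a = 1 / (2 * real d)"
  have apos: "a > 0" unfolding a_def using dpos by simp
  have dd: "1 \<le> real d * real d"
  proof -
    have "real d \<ge> 1" using d1 by simp
    then show ?thesis using mult_mono[of 1 "real d" 1 "real d"] by simp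
  qed
  have a2: "a^2 \<le> 1/4" unfolding a_def using dd by (simp add: power2_eq_square field_simps)
  show ?thesis
  proof (intro exI conjI subsetI)
    show "a > 0" by (rule apos)
    fix x :: "real ^ 'n" assume "x \<in> cball 0 1"
    hence r1: "norm x \<le> 1" by simp
    obtain j where j: "j \<in> I" "inner x (\<phi> j) \<ge> norm x / (2 * real d)" using key by blast
    have nj: "inner (\<phi> j) (\<phi> j) = 1" using self j by simp
    have ta: "2 * a * inner x (\<phi> j) \<ge> 2 * a^2 * norm x"
      using j apos unfolding a_def by (simp add: power2_eq_square field_simps)
    have "(norm (x - a *\<^sub>R \<phi> j))^2 = (norm x)^2 - 2 * a * inner x (\<phi> j) + a^2"
      unfolding power2_norm_eq_inner using nj by (simp add: inner_diff inner_commute power2_eq_square algebra_simps)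
    also have "\<dots> \<le> (norm x)^2 - 2 * a^2 * norm x + a^2" using ta by simp
    also have "\<dots> < 1"
    proof -
      have n0: "norm x \<ge> 0" by simp
      have "(norm x)^2 \<le> norm x" using r1 n0 by (simp add: power2_eq_square mult_left_le_one_le)
      moreover have "norm x * (1 - 2 * a^2) \<le> 1 - 2 * a^2" using r1 a2 by (simp add: mult_left_le_one_le mult_right_le_one_le)
      moreover have "a^2 > 0" using apos by simp
      ultimately show ?thesis by (simp add: algebra_simps, smt (verit) zero_less_power2)
    qed
    finally have "norm (x - a *\<^sub>R \<phi> j) < 1" by (simp add: power_less_one_iff abs_le_iff)
    then show "x \<in> (\<Union>j\<in>{1..CARD('n) + 1}. ball (a *\<^sub>R \<phi> j) 1)"
      using j unfolding I_def d_def by (auto simp: dist_norm norm_minus_commute)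
  qed
qed

end
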